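(* Let $\zeta:(0,\pi]\to\mathbb R^p$ be continuously differentiable with $\|\zeta(\lambda)\|\le K|\log\lambda|^\ell$ for some $\ell\ge1$ and $\|\partial\zeta(\lambda)/\partial\lambda\|\le K\lambda^{-1}|\log\lambda|^{\ell-1}$ for all $\lambda\in(0,\pi]$. For $0\le\mu<\vartheta\le\pi$ and integers $s$ define $$c_s(\mu,\vartheta)=\frac{2}{T\tilde T^{1/2}}\sum_{p=[\tilde T\mu/\pi]+1}^{[\tilde T\vartheta/\pi]}\zeta(\lambda_p)\cos(s\lambda_p).$$ Then for $0\le\mu<\vartheta_1,\vartheta_2\le\pi$, as $T\to\infty$, $$\sum_{t=1}^{T-1}\sum_{s=1}^{T-t}c_s(\mu,\vartheta_1)c_s'(\mu,\vartheta_2)=g(\mu,\vartheta_1,\vartheta_2)(1+o(1)),$$ where $g(\mu,\vartheta_1,\vartheta_2)=\frac1\pi\int_\mu^{\vartheta_1\wedge\vartheta_2}\zeta(u)\zeta'(u)du-\Big(\frac1\pi\int_\mu^{\vartheta_1}\zeta(u)du\Big)\Big(\frac1\pi\int_\mu^{\vartheta_2}\zeta'(u)du\Big)$.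
   Context: $T$ is a positive integer, $\tilde T=[T/2]$ (integer part), and $\lambda_p=2\pi p/T$. Vectors are column vectors and $'$ denotes transpose. *)

theory Defs
  imports "HOL-Analysis.Analysis"
begin

definition rpow :: "real \<Rightarrow> real \<Rightarrow> real" where
  "rpow x a = (if x = 0 then (if a = 0 then 1 else 0) else x powr a)"

definition lam :: "nat \<Rightarrow> int \<Rightarrow> real" where
  "lam T p = 2 * pi * real_of_int p / real T"

definition outer :: "real ^ 'p \<Rightarrow> real ^ 'p \<Rightarrow> real ^ 'p ^ 'p" where
  "outer a b = (\<chi> i j. a $ i * b $ j)"

text \<open>c_s(mu, theta), with tilde T = T div 2.\<close>
definition cs :: "(real \<Rightarrow> real ^ 'p) \<Rightarrow> nat \<Rightarrow> nat \<Rightarrow> real \<Rightarrow> real \<Rightarrow> real ^ 'p" where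
  "cs \<zeta> T s \<mu> \<theta> =
     (2 / (real T * sqrt (real (T div 2)))) *\<^sub>R
     (\<Sum>p \<in> {\<lfloor>real (T div 2) * \<mu> / pi\<rfloor> + 1 .. \<lfloor>real (T div 2) * \<theta> / pi\<rfloor>}.
        cos (real s * lam T p) *\<^sub>R \<zeta> (lam T p))"

definition glim :: "(real \<Rightarrow> real ^ 'p) \<Rightarrow> real \<Rightarrow> real \<Rightarrow> real \<Rightarrow> real ^ 'p ^ 'p" where
  "glim \<zeta> \<mu> \<theta>1 \<theta>2 =
     (1 / pi) *\<^sub>R integral {\<mu> .. min \<theta>1 \<theta>2} (\<lambda>u. outer (\<zeta> u) (\<zeta> u))
     - outer ((1 / pi) *\<^sub>R integral {\<mu> .. \<theta>1} \<zeta>) ((1 / pi) *\<^sub>R integral {\<mu> .. \<theta>2} \<zeta>)"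

end

theory Submission
  imports Defs
begin


lemma int_Ioc:
  fixes f :: "real \<Rightarrow> 'b::banach"
  assumes "f integrable_on {a..b}" shows "f integrable_on {a<..b}"
proof -
  have "negligible (({a..b} - {a<..b}) \<union> ({a<..b} - {a..b}))"
    by (rule negligible_subset[of "{a}"]) auto
  then show ?thesis using integrable_spike_set_eq assms by blast
qed

lemma G_int:
  fixes e :: real assumes e: "e \<ge> 1"
  shows "(\<lambda>x. (6 - ln x) powr e) integrable_on {0<..pi}"
proof (rule measurable_bounded_by_integrable_imp_integrable_real)
  show "(\<lambda>x. (6 - ln x) powr e) \<in> borel_measurable (lebesgue_on {0<..pi})"
  proof (rule continuous_imp_measurable_on_sets_lebesgue)
    have *: "\<And>x. x \<in> {0<..pi} \<Longrightarrow> 6 - ln x \<noteq> 0"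
      by (smt (verit, ccfv_threshold) greaterThanAtMost_iff ln_le_minus_one pi_less_4)
    show "continuous_on {0<..pi} (\<lambda>x. (6 - ln x) powr e)"
      by (intro continuous_intros) (use * in auto)
  qed auto
  define C where "C = (6 + 2*e) powr e"
  show "(\<lambda>x. C * (1 + x powr (-1/2))) integrable_on {0<..pi}"
  proof -
    have "(\<lambda>x. 1 + x powr (-1/2)) integrable_on {0<..pi}"
    proof (rule integrable_add)
      have "(\<lambda>x. 1::real) integrable_on {0..pi}" by (rule integrable_continuous_interval) simp
      then show "(\<lambda>x. 1::real) integrable_on {0<..pi}"
        by (rule int_Ioc)
      show "(\<lambda>x. x powr (-1/2)) integrable_on {0<..pi}"
        by (rule integrable_on_powr_from_0') auto
    qed
    from integrable_cmul[OF this, of C] show ?thesis by simp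
  qed
  show "\<bar>(6 - ln x) powr e\<bar> \<le> C * (1 + x powr (-1/2))" if x: "x \<in> {0<..pi}" for x
  proof -
    have x0: "x > 0" and xpi: "x \<le> pi" using x by auto
    have lx: "ln x < 6"
      by (smt (verit, ccfv_threshold) x greaterThanAtMost_iff ln_le_minus_one pi_less_4)
    define a where "a = 1 / (2*e)"
    have a0: "a > 0" using e by (simp add: a_def)
    have "ln (x powr (-a)) \<le> x powr (-a) - 1"
      by (rule ln_le_minus_one) (use x0 in simp)
    then have "-a * ln x \<le> x powr (-a)" using x0 by (simp add: ln_powr)
    then have "- ln x \<le> 2*e * x powr (-a)" using e unfolding a_def by (simp add: field_simps)
    define y where "y = x powr (-a)"
    have y0: "y > 0" using x0 by (simp add: y_def)
    have "6 - ln x \<le> 6 + 2*e * y" using \<open>- ln x \<le> 2*e * x powr (-a)\<close> by (simp add: y_def)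
    have ye: "y powr e = x powr (-1/2)"
      using e x0 unfolding a_def y_def by (simp add: powr_powr)
    show ?thesis
    proof (cases "y \<le> 1")
      case True
      have "6 - ln x \<le> 6 + 2*e" using \<open>6 - ln x \<le> 6 + 2*e * y\<close> True e
        by (smt (verit) mult_left_le)
      then have "(6 - ln x) powr e \<le> (6 + 2*e) powr e"
        using lx e by (intro powr_mono2) auto
      also have "\<dots> \<le> C * (1 + x powr (-1/2))" unfolding C_def
        by (simp add: mult_le_cancel_left1)
      finally show ?thesis using lx by simp
    next
      case False
      have "6 - ln x \<le> (6 + 2*e) * y" using \<open>6 - ln x \<le> 6 + 2*e * y\<close> False e
        by (simp add: algebra_simps)
      then have "(6 - ln x) powr e \<le> ((6 + 2*e) * y) powr e"
        using lx e by (intro powr_mono2) auto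
      also have "\<dots> = C * y powr e" unfolding C_def using e y0
        by (subst powr_mult) auto
      also have "\<dots> \<le> C * (1 + x powr (-1/2))" unfolding ye C_def
        by (intro mult_left_mono) auto
      finally show ?thesis using lx by simp
    qed
  qed
qed auto



definition PS :: "nat \<Rightarrow> real \<Rightarrow> real \<Rightarrow> int set" where
  "PS T a b = {\<lfloor>real (T div 2) * a / pi\<rfloor> + 1 .. \<lfloor>real (T div 2) * b / pi\<rfloor>}"

lemma PS_ge1: assumes "0 \<le> a" "p \<in> PS T a b" shows "1 \<le> p"
proof -
  have "0 \<le> real (T div 2) * a / pi" using assms by simp
  then have "0 \<le> \<lfloor>real (T div 2) * a / pi\<rfloor>" by simp
  moreover have "\<lfloor>real (T div 2) * a / pi\<rfloor> + 1 \<le> p" using assms(2) unfolding PS_def by simp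
  ultimately show ?thesis by linarith
qed

lemma PS_le: assumes "b \<le> pi" "p \<in> PS T a b" shows "2 * p \<le> int T"
proof -
  have "real_of_int p \<le> real (T div 2) * b / pi" using assms unfolding PS_def
    by (simp add: le_floor_iff)
  also have "\<dots> \<le> real (T div 2)" using assms(1) by (simp add: divide_le_eq mult_left_mono)
  finally have "p \<le> int (T div 2)" by linarith
  then show ?thesis by linarith
qed

lemma lam_le_pi: assumes "2 * p \<le> int T" "T > 0" shows "lam T p \<le> pi"
proof -
  have "2 * real_of_int p \<le> real T" using assms by linarith
  then have "2 * pi * real_of_int p \<le> pi * real T" by (simp add: mult.assoc)
  then show ?thesis unfolding lam_def using assms by (simp add: divide_le_eq)
qed

lemma lam_ge: assumes "T > 0" "x * real T / (2*pi) \<le> real_of_int k" shows "x \<le> lam T k"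
  using assms unfolding lam_def by (simp add: field_simps)

lemma eventually_large:
  assumes "d > 0" shows "eventually (\<lambda>T. c \<le> real T * d) sequentially"
proof -
  obtain n where n: "c / d \<le> real n" using real_arch_simple by blast
  show ?thesis unfolding eventually_sequentially
  proof (intro exI allI impI)
    fix T assume "n \<le> T"
    then have "c / d \<le> real T" using n by linarith
    then show "c \<le> real T * d" using assms by (simp add: divide_le_eq)
  qed
qed

lemma half_ge: "real (T div 2) \<ge> (real T - 1) / 2"
proof -
  have "T \<le> 2 * (T div 2) + 1" by linarith
  then have "real T \<le> real (2 * (T div 2) + 1)" by (simp only: of_nat_le_iff)
  then show ?thesis by simp
qed



lemma half_ge2: "0 \<le> a \<Longrightarrow> (real T - 1) / 2 * a / pi \<le> real (T div 2) * a / pi"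
  by (intro divide_right_mono mult_right_mono half_ge) auto

lemma RS:
  fixes f :: "real \<Rightarrow> 'a::euclidean_space" and G :: "real \<Rightarrow> real"
  assumes cf: "continuous_on {0<..pi} f"
    and fG: "\<And>x. x \<in> {0<..pi} \<Longrightarrow> norm (f x) \<le> G x"
    and Gmono: "\<And>x y. 0 < x \<Longrightarrow> x \<le> y \<Longrightarrow> y \<le> pi \<Longrightarrow> G y \<le> G x"
    and Gint: "G integrable_on {0<..pi}"
    and ab: "0 \<le> a" "a < b" "b \<le> pi"
  shows "(\<lambda>T. (2*pi/real T) *\<^sub>R (\<Sum>p\<in>PS T a b. f (lam T p))) \<longlonglongrightarrow> integral {a..b} f"
proof -
  define S where "S = {0<..pi} - {a,b}"
  define kk where "kk = (\<lambda>(T::nat) (x::real). \<lceil>x * real T / (2*pi)\<rceil>)"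
  define g where "g = (\<lambda>T x. if kk T x \<in> PS T a b then f (lam T (kk T x)) else 0)"
  define h where "h = (\<lambda>x. if x \<in> {a<..<b} then f x else 0)"
  have finPS: "finite (PS T a b)" for T unfolding PS_def by simp
  have kk_ge: "x * real T / (2*pi) \<le> real_of_int (kk T x)" for T x unfolding kk_def by simp
  have kk_le: "real_of_int (kk T x) \<le> x * real T / (2*pi) + 1" for T x unfolding kk_def by simp
  have gint: "(g T has_integral ((2*pi/real T) *\<^sub>R (\<Sum>p\<in>PS T a b. f (lam T p)))) S" if T0: "T > 0" for T
  proof -
    have geq: "g T x = (\<Sum>p\<in>PS T a b. if x \<in> {lam T (p-1)<..lam T p} then f (lam T p) else 0)" for x
    proof -
      have "x \<in> {lam T (p-1)<..lam T p} \<longleftrightarrow> p = kk T x" for p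
      proof -
        have "x \<in> {lam T (p-1)<..lam T p} \<longleftrightarrow> real_of_int p - 1 < x * real T / (2*pi) \<and> x * real T / (2*pi) \<le> real_of_int p"
          unfolding lam_def using T0 by (auto simp: field_simps)
        then show ?thesis unfolding kk_def using ceiling_eq_iff by metis
      qed
      then have "(\<Sum>p\<in>PS T a b. if x \<in> {lam T (p-1)<..lam T p} then f (lam T p) else 0)
          = (\<Sum>p\<in>PS T a b. if p = kk T x then f (lam T p) else 0)" by simp
      also have "\<dots> = g T x" unfolding g_def using finPS by (simp add: sum.delta)
      finally show ?thesis by simp
    qed
    have tm: "((\<lambda>x. if x \<in> {lam T (p-1)<..lam T p} then f (lam T p) else 0) has_integral (2*pi/real T) *\<^sub>R f (lam T p)) S"
      if p: "p \<in> PS T a b" for p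
    proof -
      have l0: "0 \<le> lam T (p-1)" using PS_ge1[OF ab(1) p] T0 unfolding lam_def by simp
      have upi: "lam T p \<le> pi" using PS_le[OF ab(3) p] T0 by (rule lam_le_pi)
      have lu: "lam T (p-1) \<le> lam T p" using T0 unfolding lam_def by (simp add: divide_right_mono)
      have cont: "Henstock_Kurzweil_Integration.content {lam T (p-1)..lam T p} = 2*pi/real T"
        using lu T0 unfolding lam_def by (simp add: field_simps)
      have i1: "((\<lambda>x. f (lam T p)) has_integral (2*pi/real T) *\<^sub>R f (lam T p)) {lam T (p-1)..lam T p}"
        using has_integral_const_real[of "f (lam T p)" "lam T (p-1)" "lam T p"] cont by simp
      have n1: "negligible {x \<in> {lam T (p-1)..lam T p} - ({lam T (p-1)<..lam T p} \<inter> S). f (lam T p) \<noteq> 0}"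
        by (rule negligible_subset[of "{lam T (p-1), a, b}"]) (use l0 upi in \<open>auto simp: S_def\<close>)
      have n2: "negligible {x \<in> ({lam T (p-1)<..lam T p} \<inter> S) - {lam T (p-1)..lam T p}. f (lam T p) \<noteq> 0}"
        by (rule negligible_subset[of "{}"]) auto
      have "((\<lambda>x. f (lam T p)) has_integral (2*pi/real T) *\<^sub>R f (lam T p)) ({lam T (p-1)<..lam T p} \<inter> S)"
        by (rule has_integral_spike_set_eq[THEN iffD1, OF n1 n2 i1])
      then show ?thesis by (subst has_integral_restrict_Int)
    qed
    have "((\<lambda>x. \<Sum>p\<in>PS T a b. if x \<in> {lam T (p-1)<..lam T p} then f (lam T p) else 0) has_integral
          (\<Sum>p\<in>PS T a b. (2*pi/real T) *\<^sub>R f (lam T p))) S"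
      by (rule has_integral_sum[OF finPS]) (use tm in auto)
    moreover have "g T = (\<lambda>x. \<Sum>p\<in>PS T a b. if x \<in> {lam T (p-1)<..lam T p} then f (lam T p) else 0)"
      using geq by (rule ext)
    ultimately show ?thesis by (simp add: scaleR_sum_right)
  qed
  have Gnn: "0 \<le> G x" if "x \<in> {0<..pi}" for x using fG[OF that] norm_ge_zero order_trans by blast
  have dom: "norm (g T x) \<le> G x" if x: "x \<in> S" for T x
  proof (cases "kk T x \<in> PS T a b")
    case True
    have x0: "0 < x" "x \<le> pi" using x by (auto simp: S_def)
    have "T \<noteq> 0"
    proof
      assume "T = 0" then have "PS T a b = {}" unfolding PS_def by simp
      with True show False by simp
    qed
    then have T0: "T > 0" by simp
    have upi: "lam T (kk T x) \<le> pi" using PS_le[OF ab(3) True] T0 by (rule lam_le_pi)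
    have xl: "x \<le> lam T (kk T x)" using T0 kk_ge by (rule lam_ge)
    have "norm (g T x) = norm (f (lam T (kk T x)))" using True by (simp add: g_def)
    also have "\<dots> \<le> G (lam T (kk T x))" using x0 xl upi by (intro fG) auto
    also have "\<dots> \<le> G x" using x0 xl upi by (intro Gmono) auto
    finally show ?thesis .
  next
    case False
    then show ?thesis using Gnn x by (simp add: g_def S_def)
  qed
  have conv: "(\<lambda>T. g T x) \<longlonglongrightarrow> h x" if x: "x \<in> S" for x
  proof -
    have x0: "0 < x" "x \<le> pi" "x \<noteq> a" "x \<noteq> b" using x by (auto simp: S_def)
    consider "x < a" | "a < x \<and> x < b" | "b < x" using x0 by linarith
    then show ?thesis
    proof cases
      case 1
      have ev: "eventually (\<lambda>T. 4*pi + a \<le> real T * (a - x)) sequentially"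
        using 1 by (intro eventually_large) simp
      have "eventually (\<lambda>T. g T x = 0) sequentially"
        using ev
      proof (rule eventually_mono)
        fix T assume T: "4*pi + a \<le> real T * (a - x)"
        have "real_of_int (kk T x) \<le> x * real T / (2*pi) + 1" by (rule kk_le)
        also have "\<dots> \<le> (real T - 1) / 2 * a / pi - 1"
          using mult_left_mono[OF T, of "2*pi"] by (simp add: field_simps)
        also have "\<dots> \<le> real (T div 2) * a / pi - 1"
          using half_ge2[OF ab(1), of T] by simp
        finally have "kk T x < \<lfloor>real (T div 2) * a / pi\<rfloor> + 1" by linarith
        then show "g T x = 0" unfolding g_def PS_def by auto
      qed
      moreover have "h x = 0" using 1 by (simp add: h_def)
      ultimately show ?thesis by (simp add: tendsto_eventually)
    next
      case 2
      have ev: "eventually (\<lambda>T. 2*pi + b \<le> real T * (b - x)) sequentially"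
        using 2 by (intro eventually_large) simp
      have ev0: "eventually (\<lambda>T. T > 0) sequentially"
        by (simp add: eventually_gt_at_top)
      have inPS: "eventually (\<lambda>T. kk T x \<in> PS T a b) sequentially"
        using ev ev0
      proof (rule eventually_elim2)
        fix T :: nat assume T: "2*pi + b \<le> real T * (b - x)" and T0: "T > 0"
        have "real (T div 2) * a / pi \<le> real T / 2 * a / pi"
          using ab(1) by (intro divide_right_mono mult_right_mono) auto
        also have "\<dots> < x * real T / (2*pi)" using 2 T0 by (simp add: field_simps)
        also have "\<dots> \<le> real_of_int (kk T x)" by (rule kk_ge)
        finally have lo: "\<lfloor>real (T div 2) * a / pi\<rfloor> + 1 \<le> kk T x" by linarith
        have "real_of_int (kk T x) \<le> x * real T / (2*pi) + 1" by (rule kk_le)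
        also have "\<dots> \<le> (real T - 1) / 2 * b / pi"
          using mult_left_mono[OF T, of "2*pi"] by (simp add: field_simps)
        also have "\<dots> \<le> real (T div 2) * b / pi"
          using ab by (intro half_ge2) auto
        finally have hi: "kk T x \<le> \<lfloor>real (T div 2) * b / pi\<rfloor>" by (simp add: le_floor_iff)
        show "kk T x \<in> PS T a b" using lo hi unfolding PS_def by simp
      qed
      have lamconv: "(\<lambda>T. lam T (kk T x)) \<longlonglongrightarrow> x"
      proof (rule tendsto_sandwich[of "\<lambda>T. x" _ _ "\<lambda>T. x + 2*pi / real T"])
        show "eventually (\<lambda>T. x \<le> lam T (kk T x)) sequentially"
          using ev0 by eventually_elim (use kk_ge lam_ge in blast)
        show "eventually (\<lambda>T. lam T (kk T x) \<le> x + 2*pi / real T) sequentially"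
          using ev0
        proof eventually_elim
          case (elim T)
          have "real_of_int (kk T x) \<le> x * real T / (2*pi) + 1" by (rule kk_le)
          then show ?case using elim unfolding lam_def by (simp add: field_simps)
        qed
        show "(\<lambda>T. x) \<longlonglongrightarrow> x" by simp
        have "(\<lambda>T. 2*pi / real T) \<longlonglongrightarrow> 0"
          by (intro tendsto_divide_0[OF tendsto_const] filterlim_at_top_imp_at_infinity filterlim_real_sequentially)
        then show "(\<lambda>T. x + 2*pi / real T) \<longlonglongrightarrow> x"
          using tendsto_add[of "\<lambda>T. x" x sequentially] by fastforce
      qed
      have "isCont f x"
      proof -
        have "continuous_on {0<..<pi} f" using cf by (rule continuous_on_subset) auto
        then show ?thesis using 2 x0 ab by (subst (asm) continuous_on_eq_continuous_at) auto
      qed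
      then have L: "(\<lambda>T. f (lam T (kk T x))) \<longlonglongrightarrow> f x"
        using lamconv by (rule isCont_tendsto_compose)
      have E: "eventually (\<lambda>T. f (lam T (kk T x)) = g T x) sequentially"
        using inPS by eventually_elim (simp add: g_def)
      have "h x = f x" using 2 by (simp add: h_def)
      then show ?thesis using Lim_transform_eventually[OF L E] by simp
    next
      case 3
      have "g T x = 0" for T
      proof (cases "T = 0")
        case True then show ?thesis by (auto simp: g_def PS_def)
      next
        case False
        have "real (T div 2) * b / pi \<le> real T / 2 * b / pi"
          using ab by (intro divide_right_mono mult_right_mono) auto
        also have "\<dots> < x * real T / (2*pi)" using 3 False by (simp add: field_simps)
        also have "\<dots> \<le> real_of_int (kk T x)" by (rule kk_ge)
        finally have "\<lfloor>real (T div 2) * b / pi\<rfloor> < kk T x" by linarith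
        then show ?thesis unfolding g_def PS_def by auto
      qed
      moreover have "h x = 0" using 3 by (simp add: h_def)
      ultimately show ?thesis by simp
    qed
  qed
  have GS: "G integrable_on S"
    by (rule integrable_spike_set[OF Gint]) (rule negligible_subset[of "{a,b}"]; auto simp: S_def)+
  have gi: "g T integrable_on S" for T
  proof (cases "T = 0")
    case True
    then have "g T = (\<lambda>x. 0)" by (auto simp: g_def PS_def fun_eq_iff)
    then show ?thesis using integrable_0 by simp
  next
    case False then show ?thesis using gint by blast
  qed
  have lim: "(\<lambda>T. integral S (g T)) \<longlonglongrightarrow> integral S h"
    by (rule dominated_convergence(2)[OF gi GS dom conv])
  have E: "eventually (\<lambda>T. integral S (g T) = (2*pi/real T) *\<^sub>R (\<Sum>p\<in>PS T a b. f (lam T p))) sequentially"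
    using eventually_gt_at_top[of "0::nat"] by eventually_elim (use gint in blast)
  have "integral S h = integral {a..b} f"
  proof -
    have "integral S h = integral ({a<..<b} \<inter> S) f" unfolding h_def by (rule integral_restrict_Int)
    also have "{a<..<b} \<inter> S = {a<..<b}" using ab by (auto simp: S_def)
    finally show ?thesis by (simp add: integral_open_interval_real)
  qed
  then show ?thesis using Lim_transform_eventually[OF lim E] by simp
qed



lemma sum_s_weighted:
  fixes w :: complex
  shows "(w - 1) * (\<Sum>s<n. of_nat s * w^s) = (of_nat n - 1) * w^n + 1 - (\<Sum>s<n. w^s)"
  by (induction n) (simp_all add: algebra_simps)

lemma gauss_real: "(\<Sum>s<n. real s) = real n * (real n - 1) / 2"
  by (induction n) (simp_all add: field_simps)

lemma sum_1_Tm1: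
  fixes F :: "nat \<Rightarrow> 'a::comm_monoid_add"
  assumes "T > 0"
  shows "(\<Sum>s\<in>{..<T}. F s) = F 0 + (\<Sum>s\<in>{1..T-1}. F s)"
proof -
  have "{..<T} = insert 0 {1..T-1}" using assms by auto
  then show ?thesis by simp
qed

lemma F_sum:
  fixes T :: nat and k :: int
  assumes T0: "T > 0"
  shows "(\<Sum>s\<in>{1..T-1}. (real T - real s) * cos (real s * (2*pi*real_of_int k / real T)))
       = (if int T dvd k then real T * (real T - 1) / 2 else - real T / 2)"
proof -
  define \<theta> where "\<theta> = 2*pi*real_of_int k / real T"
  define w where "w = cis \<theta>"
  have ws: "w^s = cis (real s * \<theta>)" for s unfolding w_def by (rule Complex.DeMoivre)
  have wT: "w^T = 1"
  proof -
    have "real T * \<theta> = 2*pi*real_of_int k" using T0 unfolding \<theta>_def by simp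
    then show ?thesis using ws[of T] by (simp add: complex_eq_iff)
  qed
  define Z where "Z = (\<Sum>s<T. (of_nat T - of_nat s) * w^s)"
  have ReZ: "Re Z = real T + (\<Sum>s\<in>{1..T-1}. (real T - real s) * cos (real s * \<theta>))"
  proof -
    have "Re Z = (\<Sum>s<T. (real T - real s) * cos (real s * \<theta>))"
      unfolding Z_def ws by simp
    also have "\<dots> = real T + (\<Sum>s\<in>{1..T-1}. (real T - real s) * cos (real s * \<theta>))"
      using sum_1_Tm1[OF T0, of "\<lambda>s. (real T - real s) * cos (real s * \<theta>)"] by simp
    finally show ?thesis .
  qed
  have Zeq: "Z = of_nat T * (\<Sum>s<T. w^s) - (\<Sum>s<T. of_nat s * w^s)"
    unfolding Z_def by (simp add: left_diff_distrib sum_subtractf sum_distrib_left)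
  show ?thesis
  proof (cases "int T dvd k")
    case True
    then obtain m where m: "k = int T * m" by blast
    have th: "\<theta> = (2*pi) * real_of_int m" unfolding \<theta>_def m using T0 by simp
    have "cos \<theta> = 1" "sin \<theta> = 0" unfolding th by (rule cos_int_2pin, rule sin_int_2pin)
    then have "w = 1" unfolding w_def by (simp add: complex_eq_iff)
    then have "Z = of_nat T * of_nat T - (\<Sum>s<T. of_nat s)" unfolding Zeq by simp
    then have "Re Z = real T * real T - (\<Sum>s<T. real s)" by simp
    then have "Re Z = real T * real T - real T * (real T - 1) / 2"
      using gauss_real[of T] by simp
    moreover obtain X where X: "X = (\<Sum>s\<in>{1..T-1}. (real T - real s) * cos (real s * \<theta>))" by blast
    ultimately have "Re Z = real T * real T - real T * (real T - 1) / 2" "Re Z = real T + X"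
      using ReZ by simp_all
    then have "X = real T * (real T - 1) / 2" by (simp add: field_simps)
    then have "(\<Sum>s\<in>{1..T-1}. (real T - real s) * cos (real s * \<theta>)) = real T * (real T - 1) / 2"
      using X by simp
    then show ?thesis using True unfolding \<theta>_def by simp
  next
    case False
    have w1: "w \<noteq> 1"
    proof
      assume "w = 1"
      then have "cos \<theta> = 1" unfolding w_def by (metis cis.sel(1) one_complex.sel(1))
      then obtain n :: int where n: "\<theta> = real_of_int n * 2 * pi" using cos_one_2pi_int by blast
      then have "real_of_int k = real T * n" using T0 unfolding \<theta>_def by (simp add: field_simps)
      then have "k = int T * n" by (metis of_int_eq_iff of_int_mult of_int_of_nat_eq)
      then show False using False by simp
    qed
    have S0: "(\<Sum>s<T. w^s) = 0"
      using power_diff_1_eq[of w T] wT w1 by simp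
    have S1: "(\<Sum>s<T. of_nat s * w^s) = of_nat T / (w - 1)"
      using sum_s_weighted[of w T] wT S0 w1 by (simp add: field_simps)
    have "Z = - of_nat T / (w - 1)" unfolding Zeq S0 S1 by simp
    moreover have "Re (1 / (w - 1)) = - 1 / 2"
    proof -
      have c1: "cos \<theta> \<noteq> 1"
      proof
        assume c: "cos \<theta> = 1"
        then have "sin \<theta> = 0" using sin_cos_squared_add[of \<theta>] by simp
        then have "w = 1" using c unfolding w_def by (simp add: complex_eq_iff)
        then show False using w1 by simp
      qed
      have "Re (1 / (w - 1)) = (cos \<theta> - 1) / ((cos \<theta> - 1)^2 + (sin \<theta>)^2)"
        unfolding w_def by (simp add: Re_divide)
      also have "(cos \<theta> - 1)^2 + (sin \<theta>)^2 = 2 * (1 - cos \<theta>)"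
        using sin_cos_squared_add[of \<theta>] by (simp add: power2_eq_square algebra_simps)
      also have "(cos \<theta> - 1) / (2 * (1 - cos \<theta>)) = - 1 / 2"
      proof -
        have nz: "2 * (1 - cos \<theta>) \<noteq> 0" using c1 by simp
        show ?thesis using nz by (simp add: divide_eq_eq algebra_simps)
      qed
      finally show ?thesis .
    qed
    ultimately have "Re Z = real T / 2"
    proof -
      assume Z: "Z = - of_nat T / (w - 1)" and R: "Re (1 / (w - 1)) = - 1 / 2"
      have "Z = complex_of_real (- real T) * (1 / (w - 1))" using Z by simp
      then have "Re Z = - real T * Re (1 / (w - 1))" by (simp only: times_complex.sel Re_complex_of_real Im_complex_of_real mult_zero_left diff_zero)
      then show ?thesis using R by simp
    qed
    then have "(\<Sum>s\<in>{1..T-1}. (real T - real s) * cos (real s * \<theta>)) = - real T / 2"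
      using ReZ by simp
    then show ?thesis using False unfolding \<theta>_def by simp
  qed
qed



lemma W_formula:
  fixes T :: nat and p q :: int
  assumes T0: "T > 0" and p: "1 \<le> p" "2*p \<le> int T" and q: "1 \<le> q" "2*q \<le> int T"
  shows "(\<Sum>s\<in>{1..T-1}. (real T - real s) * (cos (real s * lam T p) * cos (real s * lam T q)))
       = (if p = q then real T^2/4 else 0) + (if p = q \<and> 2*p = int T then real T^2/4 else 0) - real T/2"
proof -
  define F where "F = (\<lambda>k::int. (\<Sum>s\<in>{1..T-1}. (real T - real s) * cos (real s * (2*pi*real_of_int k / real T))))"
  have cc: "cos (real s * lam T p) * cos (real s * lam T q)
      = (cos (real s * (2*pi*real_of_int (p-q) / real T)) + cos (real s * (2*pi*real_of_int (p+q) / real T))) / 2" for s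
  proof -
    have 1: "real s * lam T p - real s * lam T q = real s * (2*pi*real_of_int (p-q) / real T)"
      using T0 unfolding lam_def by (simp add: field_simps)
    have 2: "real s * lam T p + real s * lam T q = real s * (2*pi*real_of_int (p+q) / real T)"
      using T0 unfolding lam_def by (simp add: field_simps)
    show ?thesis unfolding cos_times_cos 1 2 ..
  qed
  have "(\<Sum>s\<in>{1..T-1}. (real T - real s) * (cos (real s * lam T p) * cos (real s * lam T q)))
      = (\<Sum>s\<in>{1..T-1}. (real T - real s) * cos (real s * (2*pi*real_of_int (p-q) / real T)) / 2
                        + (real T - real s) * cos (real s * (2*pi*real_of_int (p+q) / real T)) / 2)"
    unfolding cc by (rule sum.cong) (simp_all add: field_simps)
  also have "\<dots> = F (p-q) / 2 + F (p+q) / 2"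
    unfolding F_def by (simp add: sum.distrib sum_divide_distrib)
  finally have eq: "(\<Sum>s\<in>{1..T-1}. (real T - real s) * (cos (real s * lam T p) * cos (real s * lam T q)))
      = F (p-q) / 2 + F (p+q) / 2" .
  have d1: "int T dvd (p - q) \<longleftrightarrow> p = q"
  proof
    assume dv: "int T dvd (p - q)"
    show "p = q"
    proof (rule ccontr)
      assume "p \<noteq> q"
      then have "\<bar>int T\<bar> \<le> \<bar>p - q\<bar>" using dv dvd_imp_le_int[of "p - q" "int T"] \<open>p \<noteq> q\<close> by simp
      then show False using p q by linarith
    qed
  qed simp
  have d2: "int T dvd (p + q) \<longleftrightarrow> p = q \<and> 2*p = int T"
  proof
    assume dv: "int T dvd (p + q)"
    have "\<bar>int T\<bar> \<le> \<bar>p + q\<bar>" using dv dvd_imp_le_int[of "p + q" "int T"] p q by simp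
    then show "p = q \<and> 2*p = int T" using p q by linarith
  next
    assume "p = q \<and> 2*p = int T"
    then have "p + q = int T" by simp then show "int T dvd (p + q)" by simp
  qed
  have Fv: "F k = (if int T dvd k then real T * (real T - 1) / 2 else - real T / 2)" for k
    unfolding F_def by (rule F_sum[OF T0])
  show ?thesis unfolding eq Fv d1 d2
    by (auto simp: field_simps power2_eq_square)
qed

lemma double_sum:
  fixes F :: "nat \<Rightarrow> 'a::real_vector"
  shows "(\<Sum>t=1..n-1. \<Sum>s=1..n-t. F s) = (\<Sum>s=1..n-1. real (n-s) *\<^sub>R F s)"
proof -
  have "(\<Sum>t=1..n-1. \<Sum>s=1..n-t. F s) = (\<Sum>t=1..n-1. \<Sum>s=1..n-1. if t \<le> n - s then F s else 0)"
  proof (rule sum.cong[OF refl])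
    fix t assume t: "t \<in> {1..n-1}"
    then have e: "{1..n-t} = {s\<in>{1..n-1}. t \<le> n - s}" by auto
    have "(\<Sum>s=1..n-t. F s) = (\<Sum>s\<in>{s\<in>{1..n-1}. t \<le> n - s}. F s)" by (simp only: e)
    also have "\<dots> = (\<Sum>s=1..n-1. if t \<le> n - s then F s else 0)"
      by (rule sum.inter_filter) simp
    finally show "(\<Sum>s=1..n-t. F s) = (\<Sum>s=1..n-1. if t \<le> n - s then F s else 0)" .
  qed
  also have "\<dots> = (\<Sum>s=1..n-1. \<Sum>t=1..n-1. if t \<le> n - s then F s else 0)"
    by (rule sum.swap)
  also have "\<dots> = (\<Sum>s=1..n-1. real (n-s) *\<^sub>R F s)"
  proof (rule sum.cong[OF refl])
    fix s assume s: "s \<in> {1..n-1}"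
    have "(\<Sum>t=1..n-1. if t \<le> n - s then F s else 0) = (\<Sum>t\<in>{t\<in>{1..n-1}. t \<le> n-s}. F s)"
      by (rule sum.inter_filter[symmetric]) simp
    also have "{t\<in>{1..n-1}. t \<le> n-s} = {1..n-s}" using s by auto
    finally show "(\<Sum>t=1..n-1. if t \<le> n - s then F s else 0) = real (n-s) *\<^sub>R F s" by (simp add: sum_constant_scaleR)
  qed
  finally show ?thesis .
qed



lemma alg1:
  fixes u v :: "int \<Rightarrow> real" and c :: "nat \<Rightarrow> int \<Rightarrow> real" and w :: "nat \<Rightarrow> real"
  assumes "finite P1" "finite P2" "finite S"
  shows "(\<Sum>s\<in>S. w s * ((C * (\<Sum>p\<in>P1. c s p * u p)) * (C * (\<Sum>q\<in>P2. c s q * v q))))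
       = C^2 * (\<Sum>p\<in>P1. \<Sum>q\<in>P2. (\<Sum>s\<in>S. w s * (c s p * c s q)) * u p * v q)"
proof -
  have "(\<Sum>s\<in>S. w s * ((C * (\<Sum>p\<in>P1. c s p * u p)) * (C * (\<Sum>q\<in>P2. c s q * v q))))
      = (\<Sum>s\<in>S. \<Sum>p\<in>P1. \<Sum>q\<in>P2. C^2 * (w s * (c s p * c s q)) * u p * v q)"
    by (rule sum.cong[OF refl]) (simp add: sum_product sum_distrib_left mult_ac power2_eq_square, subst sum.swap, simp add: mult_ac)
  also have "\<dots> = (\<Sum>p\<in>P1. \<Sum>s\<in>S. \<Sum>q\<in>P2. C^2 * (w s * (c s p * c s q)) * u p * v q)"
    by (rule sum.swap)
  also have "\<dots> = (\<Sum>p\<in>P1. \<Sum>q\<in>P2. \<Sum>s\<in>S. C^2 * (w s * (c s p * c s q)) * u p * v q)"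
    by (rule sum.cong[OF refl]) (rule sum.swap)
  also have "\<dots> = C^2 * (\<Sum>p\<in>P1. \<Sum>q\<in>P2. (\<Sum>s\<in>S. w s * (c s p * c s q)) * u p * v q)"
    by (simp add: sum_distrib_left sum_distrib_right mult_ac)
  finally show ?thesis .
qed

lemma alg2:
  fixes u v :: "int \<Rightarrow> real" and A B :: real
  assumes "finite P1" "finite P2"
  shows "(\<Sum>p\<in>P1. \<Sum>q\<in>P2. ((if p = q then A else 0) + (if p = q \<and> 2*p = T then A else 0) - B) * u p * v q)
       = A * (\<Sum>p\<in>P1 \<inter> P2. u p * v p) + A * (\<Sum>p\<in>P1 \<inter> P2 \<inter> {p. 2*p = T}. u p * v p)
         - B * ((\<Sum>p\<in>P1. u p) * (\<Sum>q\<in>P2. v q))"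
proof -
  have e1: "(\<Sum>q\<in>P2. (if p = q then A else 0) * u p * v q) = (if p \<in> P2 then A * u p * v p else 0)" for p
    using assms(2) by (simp add: if_distrib if_distribR cong: if_cong)
  have e2: "(\<Sum>q\<in>P2. (if p = q \<and> 2*p = T then A else 0) * u p * v q)
      = (if p \<in> P2 \<inter> {p. 2*p = T} then A * u p * v p else 0)" for p
  proof (cases "2*p = T")
    case True then show ?thesis using assms(2) by (simp add: if_distrib if_distribR cong: if_cong)
  next
    case False then show ?thesis by simp
  qed
  have "(\<Sum>p\<in>P1. \<Sum>q\<in>P2. ((if p = q then A else 0) + (if p = q \<and> 2*p = T then A else 0) - B) * u p * v q)
      = (\<Sum>p\<in>P1. (\<Sum>q\<in>P2. (if p = q then A else 0) * u p * v q)
            + (\<Sum>q\<in>P2. (if p = q \<and> 2*p = T then A else 0) * u p * v q)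
            - B * (u p * (\<Sum>q\<in>P2. v q)))"
    by (rule sum.cong[OF refl]) (simp add: algebra_simps sum.distrib sum_subtractf sum_distrib_left)
  also have "\<dots> = (\<Sum>p\<in>P1. (if p \<in> P2 then A * u p * v p else 0))
            + (\<Sum>p\<in>P1. (if p \<in> P2 \<inter> {p. 2*p = T} then A * u p * v p else 0))
            - B * ((\<Sum>p\<in>P1. u p) * (\<Sum>q\<in>P2. v q))"
    unfolding e1 e2 by (simp add: sum.distrib sum_subtractf sum_distrib_left sum_distrib_right mult_ac, subst sum.swap, simp)
  also have "(\<Sum>p\<in>P1. (if p \<in> P2 then A * u p * v p else 0)) = A * (\<Sum>p\<in>P1 \<inter> P2. u p * v p)"
    using assms(1) by (simp add: sum.inter_restrict sum_distrib_left mult_ac if_distrib cong: if_cong)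
  also have "(\<Sum>p\<in>P1. (if p \<in> P2 \<inter> {p. 2*p = T} then A * u p * v p else 0)) = A * (\<Sum>p\<in>P1 \<inter> P2 \<inter> {p. 2*p = T}. u p * v p)"
    using assms(1) sum.inter_restrict[of P1 "\<lambda>p. A * u p * v p" "P2 \<inter> {p. 2*p = T}"]
    by (simp add: sum_distrib_left mult_ac Int_assoc)
  finally show ?thesis .
qed



lemma outer_comp [simp]: "outer a b $ i $ j = a $ i * b $ j"
  by (simp add: outer_def)

lemma cs_comp: "cs \<zeta> T s \<mu> \<theta> $ i = (2 / (real T * sqrt (real (T div 2)))) * (\<Sum>p\<in>PS T \<mu> \<theta>. cos (real s * lam T p) * \<zeta> (lam T p) $ i)"
  unfolding cs_def PS_def by simp

lemma main_identity:
  fixes \<zeta> :: "real \<Rightarrow> real ^ 'p"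
  assumes T0: "T > 0" and N0: "T div 2 > 0" and mu: "0 \<le> \<mu>" and th: "\<theta>1 \<le> pi" "\<theta>2 \<le> pi"
  shows "(\<Sum>t=1..T-1. \<Sum>s=1..T-t. outer (cs \<zeta> T s \<mu> \<theta>1) (cs \<zeta> T s \<mu> \<theta>2)) =
    (1/real (T div 2)) *\<^sub>R (\<Sum>p\<in>PS T \<mu> \<theta>1 \<inter> PS T \<mu> \<theta>2. outer (\<zeta> (lam T p)) (\<zeta> (lam T p)))
    + (1/real (T div 2)) *\<^sub>R (\<Sum>p\<in>PS T \<mu> \<theta>1 \<inter> PS T \<mu> \<theta>2 \<inter> {p. 2*p = int T}. outer (\<zeta> (lam T p)) (\<zeta> (lam T p)))
    - (2/(real T * real (T div 2))) *\<^sub>R outer (\<Sum>p\<in>PS T \<mu> \<theta>1. \<zeta> (lam T p)) (\<Sum>p\<in>PS T \<mu> \<theta>2. \<zeta> (lam T p))"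
    (is "?L = ?R")
proof -
  define P1 where "P1 = PS T \<mu> \<theta>1"
  define P2 where "P2 = PS T \<mu> \<theta>2"
  define N where "N = real (T div 2)"
  define C where "C = 2 / (real T * sqrt N)"
  have fin: "finite P1" "finite P2" unfolding P1_def P2_def PS_def by simp_all
  have Npos: "N > 0" using N0 unfolding N_def by simp
  have C2: "C^2 = 4 / (real T^2 * N)"
    unfolding C_def using Npos by (simp add: power_divide power_mult_distrib)
  have L: "?L = (\<Sum>s=1..T-1. real (T-s) *\<^sub>R outer (cs \<zeta> T s \<mu> \<theta>1) (cs \<zeta> T s \<mu> \<theta>2))"
    by (rule double_sum)
  have "?L $ i $ j = ?R $ i $ j" for i j
  proof -
    define u where "u = (\<lambda>p. \<zeta> (lam T p) $ i)"
    define v where "v = (\<lambda>p. \<zeta> (lam T p) $ j)"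
    define c where "c = (\<lambda>(s::nat) (p::int). cos (real s * lam T p))"
    have "?L $ i $ j = (\<Sum>s\<in>{1..T-1}. (real T - real s) * ((C * (\<Sum>p\<in>P1. c s p * u p)) * (C * (\<Sum>q\<in>P2. c s q * v q))))"
      unfolding L sum_component vector_scaleR_component outer_comp real_scaleR_def by (intro sum.cong refl) (auto simp: cs_comp of_nat_diff C_def N_def u_def v_def c_def P1_def P2_def)
    also have "\<dots> = C^2 * (\<Sum>p\<in>P1. \<Sum>q\<in>P2. (\<Sum>s\<in>{1..T-1}. (real T - real s) * (c s p * c s q)) * u p * v q)"
      by (rule alg1) (use fin in auto)
    also have "\<dots> = C^2 * (\<Sum>p\<in>P1. \<Sum>q\<in>P2. ((if p = q then real T^2/4 else 0) + (if p = q \<and> 2*p = int T then real T^2/4 else 0) - real T/2) * u p * v q)"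
    proof -
      have "(\<Sum>s\<in>{1..T-1}. (real T - real s) * (c s p * c s q)) = (if p = q then real T^2/4 else 0) + (if p = q \<and> 2*p = int T then real T^2/4 else 0) - real T/2"
        if "p \<in> P1" "q \<in> P2" for p q
        unfolding c_def
        by (rule W_formula[OF T0]) (use that PS_ge1[OF mu] PS_le[OF th(1)] PS_le[OF th(2)] in \<open>auto simp: P1_def P2_def\<close>)
      then show ?thesis by (intro arg_cong[where f="\<lambda>x. C^2 * x"] sum.cong refl) auto
    qed
    also have "\<dots> = C^2 * (real T^2/4 * (\<Sum>p\<in>P1 \<inter> P2. u p * v p) + real T^2/4 * (\<Sum>p\<in>P1 \<inter> P2 \<inter> {p. 2*p = int T}. u p * v p)
         - real T/2 * ((\<Sum>p\<in>P1. u p) * (\<Sum>q\<in>P2. v q)))"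
      by (subst alg2) (use fin in auto)
    also have "\<dots> = (1/N) * (\<Sum>p\<in>P1 \<inter> P2. u p * v p) + (1/N) * (\<Sum>p\<in>P1 \<inter> P2 \<inter> {p. 2*p = int T}. u p * v p)
         - (2/(real T * N)) * ((\<Sum>p\<in>P1. u p) * (\<Sum>q\<in>P2. v q))"
      unfolding C2 using T0 Npos by (simp add: field_simps power2_eq_square)
    also have "\<dots> = ?R $ i $ j"
      by (simp add: N_def u_def v_def P1_def P2_def)
    finally show ?thesis .
  qed
  then show ?thesis by (simp add: vec_eq_iff)
qed



lemma norm_outer: "norm (outer a b) = norm a * norm b"
proof -
  have "outer a b $ i = a $ i *\<^sub>R b" for i by (simp add: vec_eq_iff)
  then have "norm (outer a b) = L2_set (\<lambda>i. \<bar>a $ i\<bar> * norm b) UNIV"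
    unfolding norm_vec_def[of "outer a b"] by simp
  also have "\<dots> = L2_set (\<lambda>i. \<bar>a $ i\<bar>) UNIV * norm b"
    by (rule L2_set_left_distrib[symmetric]) simp
  also have "L2_set (\<lambda>i. \<bar>a $ i\<bar>) UNIV = norm a"
    unfolding norm_vec_def by simp
  finally show ?thesis .
qed

lemma outer_scaleR_left: "outer (r *\<^sub>R a) b = r *\<^sub>R outer a b"
  by (simp add: vec_eq_iff)

lemma outer_scaleR_right: "outer a (r *\<^sub>R b) = r *\<^sub>R outer a b"
  by (simp add: vec_eq_iff)

lemma tendsto_outer:
  assumes "(f \<longlongrightarrow> A) F" "(g \<longlongrightarrow> B) F"
  shows "((\<lambda>x. outer (f x) (g x)) \<longlongrightarrow> outer A B) F"
  unfolding outer_def by (intro tendsto_vec_lambda tendsto_mult tendsto_vec_nth assms)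

lemma continuous_on_outer:
  assumes "continuous_on S f" "continuous_on S g"
  shows "continuous_on S (\<lambda>x. outer (f x) (g x))"
  unfolding outer_def by (intro continuous_on_vec_lambda continuous_on_mult continuous_on_component assms)

lemma q_lim: "(\<lambda>T. real (T div 2) / real T) \<longlonglongrightarrow> 1/2"
proof (rule tendsto_sandwich[of "\<lambda>T. 1/2 - 1/(2 * real T)" _ _ "\<lambda>T. 1/2"])
  show "eventually (\<lambda>T. 1/2 - 1/(2 * real T) \<le> real (T div 2) / real T) sequentially"
    using eventually_gt_at_top[of "0::nat"]
  proof eventually_elim
    case (elim T)
    have "(real T - 1) / 2 \<le> real (T div 2)" by (rule half_ge)
    then have h: "real T \<le> 1 + 2 * real (T div 2)" by linarith
    have "real T * real T \<le> real T * (1 + 2 * real (T div 2))" using h by (intro mult_left_mono) auto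
    then show ?case using elim by (simp add: field_simps distrib_left)
  qed
  show "eventually (\<lambda>T. real (T div 2) / real T \<le> 1/2) sequentially"
    using eventually_gt_at_top[of "0::nat"]
  proof eventually_elim
    case (elim T)
    have "real (T div 2) \<le> real T / 2" by linarith
    then show ?case using elim by (simp add: field_simps)
  qed
  show "(\<lambda>T. 1/2) \<longlonglongrightarrow> (1/2::real)" by simp
  have "(\<lambda>T. 1/(2 * real T)) \<longlonglongrightarrow> 0"
    by (intro tendsto_divide_0[OF tendsto_const] filterlim_at_top_imp_at_infinity
        filterlim_tendsto_pos_mult_at_top[OF tendsto_const] filterlim_real_sequentially) simp
  then show "(\<lambda>T. 1/2 - 1/(2 * real T)) \<longlonglongrightarrow> 1/2"
    using tendsto_diff[OF tendsto_const[of "1/2::real"]] by fastforce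
qed

lemma PS_min: "PS T a b1 \<inter> PS T a b2 = PS T a (min b1 b2)"
proof (cases "b1 \<le> b2")
  case True
  have "real (T div 2) * b1 / pi \<le> real (T div 2) * b2 / pi"
    using True by (intro divide_right_mono mult_left_mono) auto
  then have "\<lfloor>real (T div 2) * b1 / pi\<rfloor> \<le> \<lfloor>real (T div 2) * b2 / pi\<rfloor>" by (rule floor_mono)
  then show ?thesis using True unfolding PS_def by auto
next
  case False
  have "real (T div 2) * b2 / pi \<le> real (T div 2) * b1 / pi"
    using False by (intro divide_right_mono mult_left_mono) auto
  then have "\<lfloor>real (T div 2) * b2 / pi\<rfloor> \<le> \<lfloor>real (T div 2) * b1 / pi\<rfloor>" by (rule floor_mono)
  then show ?thesis using False unfolding PS_def by auto
qed



theorem lemma5: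
  fixes \<zeta> \<zeta>' :: "real \<Rightarrow> real ^ 'p" and K ell \<mu> \<theta>1 \<theta>2 :: real
  assumes deriv: "\<And>x. x \<in> {0<..pi} \<Longrightarrow> (\<zeta> has_vector_derivative \<zeta>' x) (at x within {0<..pi})"
    and cont: "continuous_on {0<..pi} \<zeta>'"
    and l: "ell \<ge> 1"
    and bound0: "\<And>x. x \<in> {0<..pi} \<Longrightarrow> norm (\<zeta> x) \<le> K * rpow \<bar>ln x\<bar> ell"
    and bound1: "\<And>x. x \<in> {0<..pi} \<Longrightarrow> norm (\<zeta>' x) \<le> K * (1 / x) * rpow \<bar>ln x\<bar> (ell - 1)"
    and mu: "0 \<le> \<mu>" "\<mu> < \<theta>1" "\<mu> < \<theta>2"
    and th: "\<theta>1 \<le> pi" "\<theta>2 \<le> pi"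
  shows "(\<lambda>T. \<Sum>t = 1 .. T - 1. \<Sum>s = 1 .. T - t.
            outer (cs \<zeta> T s \<mu> \<theta>1) (cs \<zeta> T s \<mu> \<theta>2))
         \<longlonglongrightarrow> glim \<zeta> \<mu> \<theta>1 \<theta>2"
proof -
  have cz: "continuous_on {0<..pi} \<zeta>"
    unfolding continuous_on_eq_continuous_within
    using deriv has_derivative_continuous unfolding has_vector_derivative_def by blast
  have lnb: "ln x < 3" if "x \<in> {0<..pi}" for x
    using that ln_le_minus_one[of x] pi_less_4 by auto
  have K0: "K \<ge> 0"
  proof -
    have "ln pi > 0" using pi_gt3 by simp
    then have rp: "rpow \<bar>ln pi\<bar> ell > 0" unfolding rpow_def by simp
    have "norm (\<zeta> pi) \<le> K * rpow \<bar>ln pi\<bar> ell" by (rule bound0) simp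
    then have "0 \<le> K * rpow \<bar>ln pi\<bar> ell" using norm_ge_zero order_trans by blast
    then show ?thesis using rp by (simp add: zero_le_mult_iff)
  qed
  define G1 where "G1 = (\<lambda>x. K * (6 - ln x) powr ell)"
  define G2 where "G2 = (\<lambda>x. K^2 * (6 - ln x) powr (2*ell))"
  have rp_le: "rpow \<bar>ln x\<bar> ell \<le> (6 - ln x) powr ell" if x: "x \<in> {0<..pi}" for x
  proof (cases "\<bar>ln x\<bar> = 0")
    case True then show ?thesis using l unfolding rpow_def by simp
  next
    case False
    have "\<bar>ln x\<bar> powr ell \<le> (6 - ln x) powr ell"
      using lnb[OF x] l by (intro powr_mono2) auto
    then show ?thesis using False unfolding rpow_def by simp
  qed
  have b1: "norm (\<zeta> x) \<le> G1 x" if x: "x \<in> {0<..pi}" for x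
    using bound0[OF x] mult_left_mono[OF rp_le[OF x] K0] unfolding G1_def by linarith
  have G1nn: "0 \<le> G1 x" for x unfolding G1_def using K0 by simp
  have pm: "(6 - ln y) powr e \<le> (6 - ln x) powr e" if "0 < x" "x \<le> y" "y \<le> pi" "e \<ge> 0" for x y e
  proof -
    have "ln x \<le> ln y" using that by simp
    moreover have "ln y < 3" using lnb[of y] that by auto
    ultimately show ?thesis using that by (intro powr_mono2) auto
  qed
  have G1mono: "G1 y \<le> G1 x" if "0 < x" "x \<le> y" "y \<le> pi" for x y
    unfolding G1_def using pm[OF that, of ell] l K0 by (intro mult_left_mono) auto
  have G2mono: "G2 y \<le> G2 x" if "0 < x" "x \<le> y" "y \<le> pi" for x y
    unfolding G2_def using pm[OF that, of "2*ell"] l K0 by (intro mult_left_mono) auto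
  have G1int: "G1 integrable_on {0<..pi}"
    using integrable_cmul[OF G_int[OF l], of K] unfolding G1_def by simp
  have G2int: "G2 integrable_on {0<..pi}"
    using integrable_cmul[OF G_int[of "2*ell"], of "K^2"] l unfolding G2_def by simp
  have b2: "norm (outer (\<zeta> x) (\<zeta> x)) \<le> G2 x" if x: "x \<in> {0<..pi}" for x
  proof -
    have "norm (outer (\<zeta> x) (\<zeta> x)) = norm (\<zeta> x) * norm (\<zeta> x)" by (rule norm_outer)
    also have "\<dots> \<le> G1 x * G1 x" using b1[OF x] G1nn[of x] by (intro mult_mono) auto
    also have "\<dots> = G2 x"
    proof -
      have "6 - ln x > 0" using lnb[OF x] by simp
      then show ?thesis unfolding G1_def G2_def
        by (simp add: power2_eq_square powr_add[symmetric] mult_ac)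
    qed
    finally show ?thesis .
  qed
  define m where "m = min \<theta>1 \<theta>2"
  have mm: "\<mu> < m" "m \<le> pi" using mu th by (auto simp: m_def)
  define rs1 where "rs1 = (\<lambda>T. (2*pi/real T) *\<^sub>R (\<Sum>p\<in>PS T \<mu> \<theta>1. \<zeta> (lam T p)))"
  define rs2 where "rs2 = (\<lambda>T. (2*pi/real T) *\<^sub>R (\<Sum>p\<in>PS T \<mu> \<theta>2. \<zeta> (lam T p)))"
  define rs12 where "rs12 = (\<lambda>T. (2*pi/real T) *\<^sub>R (\<Sum>p\<in>PS T \<mu> m. outer (\<zeta> (lam T p)) (\<zeta> (lam T p))))"
  have R1: "rs1 \<longlonglongrightarrow> integral {\<mu>..\<theta>1} \<zeta>"
    unfolding rs1_def by (rule RS[OF cz b1 G1mono G1int mu(1) mu(2) th(1)])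
  have R2: "rs2 \<longlonglongrightarrow> integral {\<mu>..\<theta>2} \<zeta>"
    unfolding rs2_def by (rule RS[OF cz b1 G1mono G1int mu(1) mu(3) th(2)])
  have R12: "rs12 \<longlonglongrightarrow> integral {\<mu>..m} (\<lambda>u. outer (\<zeta> u) (\<zeta> u))"
    unfolding rs12_def by (rule RS[OF continuous_on_outer[OF cz cz] b2 G2mono G2int mu(1) mm])
  define N where "N = (\<lambda>T::nat. real (T div 2))"
  define q where "q = (\<lambda>T::nat. N T / real T)"
  have qlim: "q \<longlonglongrightarrow> 1/2" unfolding q_def N_def by (rule q_lim)
  define r where "r = (\<lambda>T. 1 / (2*pi * q T))"
  define sc where "sc = (\<lambda>T. 1 / (2*pi^2 * q T))"
  have rlim: "r \<longlonglongrightarrow> 1/pi"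
  proof -
    have "r \<longlonglongrightarrow> 1 / (2*pi*(1/2))" unfolding r_def
      by (intro tendsto_divide tendsto_mult tendsto_const qlim) simp
    then show ?thesis by simp
  qed
  have slim: "sc \<longlonglongrightarrow> 1/pi^2"
  proof -
    have "sc \<longlonglongrightarrow> 1 / (2*pi^2*(1/2))" unfolding sc_def
      by (intro tendsto_divide tendsto_mult tendsto_const qlim) simp
    then show ?thesis by simp
  qed
  define E where "E = (\<lambda>T. (1 / N T) *\<^sub>R (\<Sum>p\<in>PS T \<mu> m \<inter> {p. 2*p = int T}. outer (\<zeta> (lam T p)) (\<zeta> (lam T p))))"
  have Elim: "E \<longlonglongrightarrow> 0"
  proof (rule Lim_null_comparison)
    define M where "M = norm (outer (\<zeta> pi) (\<zeta> pi))"
    show "eventually (\<lambda>T. norm (E T) \<le> M * (1 / N T)) sequentially"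
      using eventually_gt_at_top[of "0::nat"]
    proof eventually_elim
      case (elim T)
      define A where "A = PS T \<mu> m \<inter> {p. 2*p = int T}"
      have finA: "finite A" unfolding A_def PS_def by simp
      have "A \<subseteq> {int T div 2}" unfolding A_def by auto
      then have cA: "card A \<le> 1" using card_mono[of "{int T div 2}" A] by simp
      have "(\<Sum>p\<in>A. outer (\<zeta> (lam T p)) (\<zeta> (lam T p))) = (\<Sum>p\<in>A. outer (\<zeta> pi) (\<zeta> pi))"
      proof (rule sum.cong[OF refl])
        fix p assume "p \<in> A"
        then have "2 * real_of_int p = real T" unfolding A_def
          by (metis (mono_tags, lifting) IntD2 mem_Collect_eq of_int_mult of_int_numeral of_int_of_nat_eq)
        then have "lam T p = pi" unfolding lam_def using elim by (simp add: field_simps)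
        then show "outer (\<zeta> (lam T p)) (\<zeta> (lam T p)) = outer (\<zeta> pi) (\<zeta> pi)" by simp
      qed
      also have "\<dots> = real (card A) *\<^sub>R outer (\<zeta> pi) (\<zeta> pi)" by (rule sum_constant_scaleR)
      finally have "norm (\<Sum>p\<in>A. outer (\<zeta> (lam T p)) (\<zeta> (lam T p))) = real (card A) * M"
        unfolding M_def by simp
      also have "\<dots> \<le> M" using cA unfolding M_def by (simp add: mult_left_le_one_le)
      finally have nA: "norm (\<Sum>p\<in>A. outer (\<zeta> (lam T p)) (\<zeta> (lam T p))) \<le> M" .
      have "norm (E T) = (1 / N T) * norm (\<Sum>p\<in>A. outer (\<zeta> (lam T p)) (\<zeta> (lam T p)))"
        unfolding E_def A_def N_def by simp
      also have "\<dots> \<le> (1 / N T) * M" using nA unfolding N_def by (intro mult_left_mono) auto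
      finally show ?case by (simp add: mult.commute)
    qed
    have "(\<lambda>T. (1 / q T) / real T) \<longlonglongrightarrow> 0"
      by (intro tendsto_divide_0[OF tendsto_divide[OF tendsto_const qlim]]
          filterlim_at_top_imp_at_infinity filterlim_real_sequentially) simp
    moreover have "(1 / q T) / real T = 1 / N T" for T
      unfolding q_def N_def by (cases "N T = 0"; cases "T = 0") (simp_all add: field_simps)
    ultimately have "(\<lambda>T. 1 / N T) \<longlonglongrightarrow> 0" by simp
    then show "(\<lambda>T. M * (1 / N T)) \<longlonglongrightarrow> 0"
      using tendsto_mult[OF tendsto_const[of M]] by fastforce
  qed
  define F where "F = (\<lambda>T. r T *\<^sub>R rs12 T + E T - sc T *\<^sub>R outer (rs1 T) (rs2 T))"
  have Flim: "F \<longlonglongrightarrow> (1/pi) *\<^sub>R integral {\<mu>..m} (\<lambda>u. outer (\<zeta> u) (\<zeta> u)) + 0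
      - (1/pi^2) *\<^sub>R outer (integral {\<mu>..\<theta>1} \<zeta>) (integral {\<mu>..\<theta>2} \<zeta>)"
    unfolding F_def by (intro tendsto_diff tendsto_add tendsto_scaleR rlim R12 Elim slim tendsto_outer R1 R2)
  have glim_eq: "glim \<zeta> \<mu> \<theta>1 \<theta>2 = (1/pi) *\<^sub>R integral {\<mu>..m} (\<lambda>u. outer (\<zeta> u) (\<zeta> u)) + 0
      - (1/pi^2) *\<^sub>R outer (integral {\<mu>..\<theta>1} \<zeta>) (integral {\<mu>..\<theta>2} \<zeta>)"
    unfolding glim_def m_def outer_scaleR_left outer_scaleR_right by (simp add: power2_eq_square)
  have ev: "eventually (\<lambda>T. F T = (\<Sum>t = 1 .. T - 1. \<Sum>s = 1 .. T - t.
            outer (cs \<zeta> T s \<mu> \<theta>1) (cs \<zeta> T s \<mu> \<theta>2))) sequentially"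
    using eventually_ge_at_top[of "2::nat"]
  proof eventually_elim
    case (elim T)
    have T0: "T > 0" and N0: "T div 2 > 0" using elim by auto
    have Np: "N T > 0" using N0 unfolding N_def by simp
    have e1: "r T * (2*pi/real T) = 1 / N T"
      unfolding r_def q_def using T0 Np by (simp add: field_simps)
    have e2: "sc T * (2*pi/real T) * (2*pi/real T) = 2 / (real T * N T)"
      unfolding sc_def q_def using T0 Np by (simp add: field_simps power2_eq_square)
    have e2': "sc T * 4 * pi * pi / (real T * real T) = 2 / (real T * N T)"
      unfolding sc_def q_def using T0 Np by (simp add: field_simps power2_eq_square)
    have "F T = (1 / N T) *\<^sub>R (\<Sum>p\<in>PS T \<mu> m. outer (\<zeta> (lam T p)) (\<zeta> (lam T p))) + E T
        - (2 / (real T * N T)) *\<^sub>R outer (\<Sum>p\<in>PS T \<mu> \<theta>1. \<zeta> (lam T p)) (\<Sum>p\<in>PS T \<mu> \<theta>2. \<zeta> (lam T p))"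
      unfolding F_def rs12_def rs1_def rs2_def outer_scaleR_left outer_scaleR_right scaleR_scaleR e1
      by (simp add: e2 e2' mult.assoc[symmetric])
    also have "\<dots> = (\<Sum>t = 1 .. T - 1. \<Sum>s = 1 .. T - t. outer (cs \<zeta> T s \<mu> \<theta>1) (cs \<zeta> T s \<mu> \<theta>2))"
      unfolding main_identity[OF T0 N0 mu(1) th] PS_min E_def N_def m_def by simp
    finally show ?case .
  qed
  show ?thesis unfolding glim_eq using Lim_transform_eventually[OF Flim ev] .
qed


end
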